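(* Let $x,y\in\mathbb{H}^2$ with $d(x,\partial\mathbb{H}^2)=d(y,\partial\mathbb{H}^2)=d$. (1) If $|x-y|>2d$, then $\tilde\tau_{\mathbb{H}^2}(x,y)=\log\Big(1+\sqrt{\tfrac{|x-y|}{d}}\Big)$. (2) If $|x-y|\le 2d$, then $\tilde\tau_{\mathbb{H}^2}(x,y)=\log\Big(1+\tfrac{2|x-y|}{\sqrt{4d^2+|x-y|^2}}\Big)$.
   Context: $\mathbb{H}^n=\{(x_1,\dots,x_n)\in\mathbb{R}^n: x_n>0\}$ is the upper half space, with boundary $\partial\mathbb{H}^n=\{x_n=0\}$ (in $\mathbb{R}^n$); $d(x,\partial D)$ is the Euclidean distance from $x$ to $\partial D$. For a proper subdomain $D\subsetneq\mathbb{R}^n$ and $x,y\in D$, $\tilde\tau_D(x,y)=\log\big(1+\sup_{p\in\partial D}\frac{|x-y|}{\sqrt{|x-p||y-p|}}\big)$ (the scale invariant Cassinian metric). *)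

theory Defs
  imports "HOL-Analysis.Analysis"
begin

text \<open>Upper half plane in R^2 (second coordinate is x_n).\<close>
definition upper_half_plane :: "(real^2) set" where
  "upper_half_plane = {z. z $ 2 > 0}"

definition cassinian_tilde :: "('a::real_normed_vector) set \<Rightarrow> 'a \<Rightarrow> 'a \<Rightarrow> real" where
  "cassinian_tilde D x y =
     ln (1 + (SUP p \<in> frontier D. dist x y / sqrt (dist x p * dist y p)))"

end

theory Submission
  imports Defs
begin

lemma id1: "((a-t)^2+d^2)*((b-t)^2+d^2) - (a-b)^2*d^2 = ((t-(a+b)/2)^2 + d^2 - (a-b)^2/4)^2" for a b t d :: real
  by (simp add: field_simps power2_eq_square)
lemma id2: "((a-t)^2+d^2)*((b-t)^2+d^2) - (((a-b)^2+4*d^2)/4)^2 = ((t-(a+b)/2)^2)^2 + 2*(t-(a+b)/2)^2*(d^2 - (a-b)^2/4)" for a b t d :: real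
  by (simp add: field_simps power2_eq_square)
lemma ubound: fixes s m4 q :: real assumes "s \<ge> 0" "m4 > 0" "m4 \<le> q"
  shows "s / sqrt (sqrt q) \<le> s / sqrt (sqrt m4)"
  by (rule frac_le) (use assms in auto)
lemma M1: fixes s d :: real assumes "s > 0" "d > 0" shows "s / sqrt (sqrt (s^2*d^2)) = sqrt (s/d)"
proof -
  have "sqrt (s^2*d^2) = s*d" using assms by (simp add: real_sqrt_mult)
  moreover have "s = sqrt s * sqrt s" using assms by simp
  ultimately show ?thesis using assms by (simp add: real_sqrt_mult real_sqrt_divide field_simps)
qed
lemma M2: fixes s d :: real assumes "s \<ge> 0" "d > 0"
  shows "s / sqrt (sqrt (((s^2+4*d^2)/4)^2)) = 2 * s / sqrt (4*d^2 + s^2)"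
proof -
  have e1: "sqrt (((s^2+4*d^2)/4)^2) = (s^2+4*d^2)/4" using assms by simp
  have e2: "sqrt ((s^2+4*d^2)/4) = sqrt (s^2+4*d^2)/2" by (simp add: real_sqrt_divide)
  show ?thesis unfolding e1 e2 by (simp add: add.commute)
qed

lemma dist2: "dist (u::real^2) v = sqrt ((u$1-v$1)^2 + (u$2-v$2)^2)"
  unfolding dist_norm norm_vec_def L2_set_def sum_2 by (simp add: dist_real_def power2_abs)
lemma infd: assumes "x$2 > 0" shows "infdist (x::real^2) {z. z$2 = 0} = x$2"
proof (rule antisym)
  let ?p = "vector [x$1, 0] :: real^2"
  have pin: "?p \<in> {z. z$2=0}" by simp
  have d: "dist x ?p = x$2" using assms unfolding dist2 by simp
  show "infdist x {z. z$2 = 0} \<le> x$2" using infdist_le[OF pin, of x] unfolding d .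
  have ne: "{z::real^2. z$2 = 0} \<noteq> {}" using pin by blast
  have "x$2 \<le> Inf (dist x ` {z. z$2 = 0})"
  proof (rule cINF_greatest)
    show "{z::real^2. z$2 = 0} \<noteq> {}" by (rule ne)
    fix z :: "real^2" assume z: "z \<in> {z. z$2 = 0}"
    have "(x$2)^2 \<le> (x$1-z$1)^2 + (x$2-z$2)^2" using z by simp
    then show "x$2 \<le> dist x z" unfolding dist2 by (rule real_le_rsqrt)
  qed
  then show "x$2 \<le> infdist x {z. z$2 = 0}" unfolding infdist_def if_not_P[OF ne] .
qed
lemma front: "frontier upper_half_plane = {z. z$2 = 0}"
proof -
  have e: "upper_half_plane = {z. axis 2 (1::real) \<bullet> z > 0}"
    unfolding upper_half_plane_def by (simp add: cart_eq_inner_axis inner_commute)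
  have "axis 2 (1::real) \<noteq> (0::real^2)" by (simp add: axis_eq_0_iff)
  then have "frontier {z. axis 2 (1::real) \<bullet> z > 0} = {z::real^2. axis 2 1 \<bullet> z = 0}"
    using frontier_halfspace_gt[of "axis 2 (1::real)" 0] by simp
  then show ?thesis unfolding e by (simp add: cart_eq_inner_axis inner_commute)
qed

lemma sup_max: fixes F :: "'a \<Rightarrow> real"
  assumes "\<And>p. p \<in> S \<Longrightarrow> F p \<le> M" "q \<in> S" "F q = M"
  shows "(SUP p\<in>S. F p) = M"
  by (rule cSup_eq_maximum) (use assms in force)+

theorem lemma3p9:
  fixes x y :: "real^2" and d :: real
  assumes "x \<in> upper_half_plane" and "y \<in> upper_half_plane"
    and "infdist x (frontier upper_half_plane) = d"
    and "infdist y (frontier upper_half_plane) = d"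
  shows "(dist x y > 2 * d \<longrightarrow>
            cassinian_tilde upper_half_plane x y = ln (1 + sqrt (dist x y / d)))
       \<and> (dist x y \<le> 2 * d \<longrightarrow>
            cassinian_tilde upper_half_plane x y
              = ln (1 + 2 * dist x y / sqrt (4 * d^2 + (dist x y)^2)))"
proof -
  have x2: "x$2 > 0" and y2: "y$2 > 0" using assms(1,2) unfolding upper_half_plane_def by auto
  have xd: "x$2 = d" using assms(3) infd[OF x2] unfolding front by simp
  have yd: "y$2 = d" using assms(4) infd[OF y2] unfolding front by simp
  have dpos: "d > 0" using x2 xd by simp
  define a where "a = x$1"
  define b where "b = y$1"
  define s where "s = dist x y"
  have s_eq: "s = \<bar>a - b\<bar>" unfolding s_def a_def b_def dist2 xd yd by simp
  have s2: "s^2 = (a-b)^2" using s_eq by simp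
  have s0: "s \<ge> 0" unfolding s_def by simp
  define G where "G t = s / sqrt (sqrt (((a-t)^2+d^2)*((b-t)^2+d^2)))" for t
  have FG: "dist x y / sqrt (dist x p * dist y p) = G (p$1)" if "p \<in> frontier upper_half_plane" for p
  proof -
    have p2: "p$2 = 0" using that unfolding front by simp
    have "dist x p * dist y p = sqrt (((a-p$1)^2+d^2)*((b-p$1)^2+d^2))"
      unfolding dist2 p2 xd yd a_def b_def by (simp add: real_sqrt_mult)
    then show ?thesis unfolding G_def s_def by simp
  qed
  have vin: "vector [t, 0] \<in> frontier upper_half_plane" for t :: real unfolding front by simp
  have v1: "(vector [t, 0] :: real^2) $ 1 = t" for t :: real by simp
  have ct: "cassinian_tilde upper_half_plane x y = ln (1 + (SUP p\<in>frontier upper_half_plane. G (p$1)))"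
    unfolding cassinian_tilde_def using FG by (metis (no_types, lifting) SUP_cong)
  have AB1: "((a-t)^2+d^2)*((b-t)^2+d^2) \<ge> s^2*d^2" for t
    using id1[of a t d b] unfolding s2 by (metis diff_ge_0_iff_ge zero_le_power2)
  have c1: "cassinian_tilde upper_half_plane x y = ln (1 + sqrt (dist x y / d))" if gt: "dist x y > 2*d"
  proof -
    have spos: "s > 0" using gt dpos unfolding s_def by linarith
    have M: "s / sqrt (sqrt (s^2*d^2)) = sqrt (s/d)" by (rule M1[OF spos dpos])
    have m4: "s^2*d^2 > 0" using spos dpos by simp
    define t0 where "t0 = (a+b)/2 + sqrt ((a-b)^2/4 - d^2)"
    have "(a-b)^2 > (2*d)^2" unfolding s2[symmetric] using gt dpos unfolding s_def
      by (intro power_strict_mono) auto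
    then have nn: "(a-b)^2/4 - d^2 \<ge> 0" by (simp add: power_mult_distrib)
    have "(t0-(a+b)/2)^2 = (a-b)^2/4 - d^2" unfolding t0_def using nn by simp
    then have "((a-t0)^2+d^2)*((b-t0)^2+d^2) = s^2*d^2" using id1[of a t0 d b] unfolding s2 by simp
    then have Gt0: "G t0 = sqrt (s/d)" unfolding G_def using M by simp
    have "(SUP p\<in>frontier upper_half_plane. G (p$1)) = sqrt (s/d)"
    proof (rule sup_max[OF _ vin[of t0]])
      show "G ((vector [t0, 0] :: real^2) $ 1) = sqrt (s/d)" using Gt0 by simp
      fix p :: "real^2" 
      show "G (p$1) \<le> sqrt (s/d)" unfolding G_def M[symmetric]
        by (rule ubound[OF s0 m4 AB1])
    qed
    then show ?thesis using ct unfolding s_def by simp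
  qed
  have c2: "cassinian_tilde upper_half_plane x y = ln (1 + 2 * dist x y / sqrt (4 * d^2 + (dist x y)^2))"
    if le: "dist x y \<le> 2*d"
  proof -
    have M: "s / sqrt (sqrt (((s^2+4*d^2)/4)^2)) = 2 * s / sqrt (4*d^2 + s^2)" by (rule M2[OF s0 dpos])
    have m4: "((s^2+4*d^2)/4)^2 > 0" using dpos by (simp add: add_nonneg_pos add_nonneg_eq_0_iff)
    have "(a-b)^2 \<le> (2*d)^2" unfolding s2[symmetric] using le s0 unfolding s_def
      by (intro power_mono) auto
    then have nn: "d^2 - (a-b)^2/4 \<ge> 0" by (simp add: power_mult_distrib)
    have AB: "((a-t)^2+d^2)*((b-t)^2+d^2) \<ge> ((s^2+4*d^2)/4)^2" for t
      using id2[of a t d b] nn unfolding s2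
      by (smt (verit) mult_nonneg_nonneg zero_le_power2)
    define t0 where "t0 = (a+b)/2"
    have "((a-t0)^2+d^2)*((b-t0)^2+d^2) = ((s^2+4*d^2)/4)^2" using id2[of a t0 d b] unfolding s2 t0_def by simp
    then have Gt0: "G t0 = 2 * s / sqrt (4*d^2 + s^2)" unfolding G_def using M by simp
    have "(SUP p\<in>frontier upper_half_plane. G (p$1)) = 2 * s / sqrt (4*d^2 + s^2)"
    proof (rule sup_max[OF _ vin[of t0]])
      show "G ((vector [t0, 0] :: real^2) $ 1) = 2 * s / sqrt (4*d^2 + s^2)" using Gt0 by simp
      fix p :: "real^2"
      show "G (p$1) \<le> 2 * s / sqrt (4*d^2 + s^2)" unfolding G_def M[symmetric]
        by (rule ubound[OF s0 m4 AB])
    qed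
    then show ?thesis using ct unfolding s_def by simp
  qed
  show ?thesis using c1 c2 by blast
qed

end
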